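(* Let $t\ge 2$ be an even integer, let $p\ge 3$ be a prime with $p\equiv 1\pmod{t-1}$, and let $n_t=\frac{p(p-1)}{2(t-1)}$. Then $$ex(n_t,n_t,n_t,K_{2,t})\ge \frac{3p(p-1)^2}{4(t-1)}.$$
   Context: $K_{2,t}$ denotes the complete bipartite graph with parts of sizes $2$ and $t$. For an integer $n\ge1$, $ex(n,n,n,K_{2,t})$ is the maximum number of edges in a tripartite graph with three vertex classes each of size $n$ (edges only between different classes) that contains no subgraph isomorphic to $K_{2,t}$. *)

theory Defs
  imports "HOL-Number_Theory.Number_Theory"
begin

definition tri_vertices :: "nat \<Rightarrow> (nat \<times> nat) set" where
  "tri_vertices n = {0..<3} \<times> {0..<n}"

definition tripartite_graph :: "nat \<Rightarrow> (nat \<times> nat) set set \<Rightarrow> bool" where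
  "tripartite_graph n E \<longleftrightarrow>
     (\<forall>e\<in>E. \<exists>u v. e = {u, v} \<and> u \<in> tri_vertices n \<and> v \<in> tri_vertices n \<and> fst u \<noteq> fst v)"

definition contains_K2t :: "(nat \<times> nat) set set \<Rightarrow> nat \<Rightarrow> bool" where
  "contains_K2t E t \<longleftrightarrow>
     (\<exists>a b T. a \<noteq> b \<and> finite T \<and> card T = t \<and> a \<notin> T \<and> b \<notin> T \<and>
        (\<forall>x\<in>T. {a, x} \<in> E \<and> {b, x} \<in> E))"

definition ex3_K2t :: "nat \<Rightarrow> nat \<Rightarrow> nat" where
  "ex3_K2t n t = Max {card E | E. tripartite_graph n E \<and> \<not> contains_K2t E t}"

end

theory Submission
  imports Defs
begin

lemma natcong_dvd: "[(a::nat) = b] (mod m) \<longleftrightarrow> int m dvd int a - int b"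
  by (simp add: cong_int_iff[symmetric] cong_iff_dvd_diff)

locale K2t_constr =
  fixes p t g N :: nat
  assumes prime_p: "prime p" and p3: "p \<ge> 3" and t2: "t \<ge> 2"
    and primroot: "residue_primroot p g"
    and Ndef: "p - 1 = 2 * N * (t - 1)"
begin

lemma ordg: "ord p g = p - 1"
  using primroot prime_p by (simp add: residue_primroot_def totient_prime)

lemma cop: "coprime p g"
  using primroot by (simp add: residue_primroot_def)

lemma not_dvd_g: "\<not> p dvd g"
proof
  assume "p dvd g"
  then have "is_unit p" using cop coprime_absorb_left by blast
  then show False using prime_p by auto
qed

lemma Npos: "N > 0"
  using Ndef p3 by (cases N) auto

lemma gpow: "[g ^ a = g ^ b] (mod p) \<longleftrightarrow> [a = b] (mod (p - 1))"
  using order_divides_expdiff[OF cop] ordg by simp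

lemma gpow_int: "[g ^ a = g ^ b] (mod p) \<longleftrightarrow> int (p - 1) dvd int a - int b"
  using gpow natcong_dvd by simp

lemma QR: "\<not> [g ^ (2 * a) = g * g ^ (2 * b)] (mod p)"
proof
  assume "[g ^ (2 * a) = g * g ^ (2 * b)] (mod p)"
  then have "[g ^ (2 * a) = g ^ (2 * b + 1)] (mod p)" by (simp add: power_add mult.commute)
  then have "[2 * a = 2 * b + 1] (mod (p - 1))" using gpow by blast
  moreover have "2 dvd p - 1" using Ndef by simp
  ultimately have "[2 * a = 2 * b + 1] (mod 2)" using cong_dvd_modulus_nat by blast
  then show False by (simp add: cong_def)
qed

lemma Cuniq:
  assumes "[g ^ (2 * (A + c1 + N * l1)) = g ^ (2 * (A + c2 + N * l2))] (mod p)"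
    and "c1 < N" "c2 < N"
  shows "c1 = c2"
proof -
  have "int (p - 1) dvd int (2 * (A + c1 + N * l1)) - int (2 * (A + c2 + N * l2))"
    using assms(1) gpow_int by blast
  moreover have "int (p - 1) = (2 * int N) * int (t - 1)" using Ndef by simp
  ultimately have "2 * int N dvd int (2 * (A + c1 + N * l1)) - int (2 * (A + c2 + N * l2))"
    using dvd_trans dvd_triv_left by metis
  moreover have "int (2 * (A + c1 + N * l1)) - int (2 * (A + c2 + N * l2))
      = 2 * (int c1 - int c2) + (2 * int N) * (int l1 - int l2)" by (simp add: algebra_simps)
  ultimately have "2 * int N dvd 2 * (int c1 - int c2)"
    by (metis dvd_add_left_iff dvd_triv_left)
  then have "int N dvd int c1 - int c2" by (rule zdvd_mult_cancel[of 2]) auto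
  then have "[c1 = c2] (mod N)" using natcong_dvd by simp
  then show ?thesis using cong_less_modulus_unique_nat assms by blast
qed

lemma pint: "prime (int p)" using prime_p by simp

lemma pdvd_mult: "int p dvd a * b \<Longrightarrow> int p dvd a \<or> int p dvd b"
  using pint prime_dvd_mult_iff by blast

definition alpha :: "nat \<Rightarrow> nat \<Rightarrow> nat" where
  "alpha i j = (if j = Suc i mod 3 then 1 else g)"

definition Xc :: "nat \<times> nat \<Rightarrow> nat" where "Xc v = snd v mod p"
definition Cc :: "nat \<times> nat \<Rightarrow> nat" where "Cc v = snd v div p"

definition Lf :: "nat \<times> nat \<Rightarrow> nat \<times> nat \<Rightarrow> nat" where
  "Lf v w = alpha (fst v) (fst w) * Xc v + alpha (fst w) (fst v) * Xc w"

definition adj :: "nat \<times> nat \<Rightarrow> nat \<times> nat \<Rightarrow> bool" where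
  "adj v w \<longleftrightarrow> fst v < 3 \<and> fst w < 3 \<and> fst v \<noteq> fst w \<and> snd v < p * N \<and> snd w < p * N
     \<and> (\<exists>l. [Lf v w = g ^ (2 * (Cc v + Cc w + N * l))] (mod p))"

lemma Lf_sym: "Lf v w = Lf w v"
  by (simp add: Lf_def)

lemma adj_sym: "adj v w \<Longrightarrow> adj w v"
  unfolding adj_def by (auto simp: Lf_sym add.commute add.left_commute)

lemma alpha_distinct:
  assumes "i < 3" "j < 3" "k < 3" "i \<noteq> j" "i \<noteq> k" "j \<noteq> k"
  shows "(alpha i j = 1 \<and> alpha i k = g) \<or> (alpha i j = g \<and> alpha i k = 1)"
proof -
  have "i = 0 \<or> i = 1 \<or> i = 2" "j = 0 \<or> j = 1 \<or> j = 2" "k = 0 \<or> k = 1 \<or> k = 2"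
    using assms by auto
  then show ?thesis using assms(4-6) unfolding alpha_def by (elim disjE) simp_all
qed

lemma alpha_ndvd: "\<not> int p dvd int (alpha i j)"
proof -
  have "\<not> p dvd alpha i j" using not_dvd_g prime_p
    by (auto simp: alpha_def)
  then show ?thesis by simp
qed

lemma Xc_less: "Xc v < p" using p3 by (simp add: Xc_def)

lemma Cc_less: "snd v < p * N \<Longrightarrow> Cc v < N"
  by (simp add: Cc_def less_mult_imp_div_less mult.commute)

lemma vertex_eq: "fst v = fst w \<Longrightarrow> Xc v = Xc w \<Longrightarrow> Cc v = Cc w \<Longrightarrow> v = w"
  unfolding Xc_def Cc_def by (metis div_mult_mod_eq prod_eqI)

lemma X_eq: "int p dvd int (Xc v) - int (Xc w) \<Longrightarrow> Xc v = Xc w"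
  using natcong_dvd cong_less_modulus_unique_nat Xc_less by blast

lemma QRc:
  assumes "[P = g ^ (2 * e1)] (mod p)" "[Q = g ^ (2 * e2)] (mod p)"
    and "(\<beta> = 1 \<and> \<delta> = g) \<or> (\<beta> = g \<and> \<delta> = 1)"
    and "int p dvd int \<delta> * int P - int \<beta> * int Q"
  shows False
proof -
  have c: "[\<delta> * P = \<beta> * Q] (mod p)" using assms(4) natcong_dvd by simp
  from assms(3) show False
  proof
    assume h: "\<beta> = 1 \<and> \<delta> = g"
    have "[g * g ^ (2 * e1) = g * P] (mod p)" using assms(1) cong_scalar_left cong_sym by blast
    also have "[g * P = Q] (mod p)" using c h by simp
    also have "[Q = g ^ (2 * e2)] (mod p)" by fact
    finally show False using QR cong_sym by blast
  next
    assume h: "\<beta> = g \<and> \<delta> = 1"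
    have "[g ^ (2 * e1) = P] (mod p)" using assms(1) cong_sym by blast
    also have "[P = g * Q] (mod p)" using c h by simp
    also have "[g * Q = g * g ^ (2 * e2)] (mod p)" using assms(2) cong_scalar_left by blast
    finally show False using QR by blast
  qed
qed

lemma no_two:
  assumes ab: "a \<noteq> b" and xy: "x \<noteq> y"
    and adj: "adj a x" "adj b x" "adj a y" "adj b y"
    and e1: "[Lf a x = g ^ (2 * (Cc a + Cc x + N * l1x))] (mod p)"
    and e2: "[Lf b x = g ^ (2 * (Cc b + Cc x + N * l2x))] (mod p)"
    and e3: "[Lf a y = g ^ (2 * (Cc a + Cc y + N * l1y))] (mod p)"
    and e4: "[Lf b y = g ^ (2 * (Cc b + Cc y + N * l2y))] (mod p)"
    and ll: "[l1x + l2y = l1y + l2x] (mod (t - 1))"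
  shows False
proof -
  define E1 where "E1 = 2 * (Cc a + Cc x + N * l1x) + 2 * (Cc b + Cc y + N * l2y)"
  define E2 where "E2 = 2 * (Cc a + Cc y + N * l1y) + 2 * (Cc b + Cc x + N * l2x)"
  have "[Lf a x * Lf b y = g ^ E1] (mod p)"
    unfolding E1_def power_add using cong_mult[OF e1 e4] .
  moreover have "[Lf a y * Lf b x = g ^ E2] (mod p)"
    unfolding E2_def power_add using cong_mult[OF e3 e2] .
  moreover have "[g ^ E1 = g ^ E2] (mod p)"
  proof -
    have "int (t - 1) dvd (int l1x + int l2y) - (int l1y + int l2x)"
      using ll natcong_dvd by simp
    then have "(2 * int N) * int (t - 1) dvd (2 * int N) * ((int l1x + int l2y) - (int l1y + int l2x))"
      by (rule mult_dvd_mono[OF dvd_refl])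
    moreover have "int (p - 1) = (2 * int N) * int (t - 1)" using Ndef by simp
    moreover have "int E1 - int E2 = (2 * int N) * ((int l1x + int l2y) - (int l1y + int l2x))"
      unfolding E1_def E2_def by (simp add: algebra_simps)
    ultimately show ?thesis using gpow_int by simp
  qed
  ultimately have "[Lf a x * Lf b y = Lf a y * Lf b x] (mod p)"
    by (meson cong_sym cong_trans)
  then have key: "int p dvd int (Lf a x) * int (Lf b y) - int (Lf a y) * int (Lf b x)"
    using natcong_dvd by simp
  have cl: "fst a < 3" "fst b < 3" "fst x < 3" "fst y < 3"
    "fst a \<noteq> fst x" "fst b \<noteq> fst x" "fst a \<noteq> fst y" "fst b \<noteq> fst y"
    using adj by (auto simp: adj_def)
  have Cl: "Cc a < N" "Cc b < N" "Cc x < N" "Cc y < N"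
    using adj Cc_less by (auto simp: adj_def)
  show False
  proof (cases "fst a = fst b")
    case True
    define ax where "ax = int (alpha (fst a) (fst x))"
    define ay where "ay = int (alpha (fst a) (fst y))"
    define bx where "bx = int (alpha (fst x) (fst a))"
    define by' where "by' = int (alpha (fst y) (fst a))"
    define Px where "Px = int (Lf a x)"
    define Py where "Py = int (Lf a y)"
    have LPx: "Px = ax * int (Xc a) + bx * int (Xc x)" unfolding Px_def ax_def bx_def Lf_def by simp
    have LPy: "Py = ay * int (Xc a) + by' * int (Xc y)" unfolding Py_def ay_def by'_def Lf_def by simp
    have LQx: "int (Lf b x) = ax * int (Xc b) + bx * int (Xc x)"
      unfolding ax_def bx_def Lf_def using True by simp
    have LQy: "int (Lf b y) = ay * int (Xc b) + by' * int (Xc y)"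
      unfolding ay_def by'_def Lf_def using True by simp
    have idt: "int (Lf a x) * int (Lf b y) - int (Lf a y) * int (Lf b x)
        = (int (Xc a) - int (Xc b)) * (ax * Py - ay * Px)"
      unfolding LQx LQy by (simp add: Px_def[symmetric] Py_def[symmetric] LPx LPy algebra_simps)
    have "int p dvd (int (Xc a) - int (Xc b)) * (ax * Py - ay * Px)"
      using key unfolding idt .
    then have "int p dvd int (Xc a) - int (Xc b) \<or> int p dvd ax * Py - ay * Px"
      by (rule pdvd_mult)
    then show False
    proof
      assume "int p dvd int (Xc a) - int (Xc b)"
      then have "Xc a = Xc b" by (rule X_eq)
      then have "Lf a x = Lf b x" unfolding Lf_def using True by simp
      then have "[g ^ (2 * (Cc a + Cc x + N * l1x)) = g ^ (2 * (Cc b + Cc x + N * l2x))] (mod p)"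
        using e1 e2 by (metis cong_sym cong_trans)
      moreover have "Cc a + Cc x + N * l1x = Cc x + Cc a + N * l1x"
        "Cc b + Cc x + N * l2x = Cc x + Cc b + N * l2x" by simp_all
      ultimately have "Cc a = Cc b" using Cuniq[of "Cc x" "Cc a" l1x "Cc b" l2x] Cl by simp
      then show False using ab True \<open>Xc a = Xc b\<close> vertex_eq by blast
    next
      assume h: "int p dvd ax * Py - ay * Px"
      show False
      proof (cases "fst x = fst y")
        case True
        then have "ax = ay" "bx = by'" unfolding ax_def ay_def bx_def by'_def by simp_all
        then have "ax * Py - ay * Px = ax * (bx * (int (Xc y) - int (Xc x)))"
          using LPx LPy by (simp add: algebra_simps)
        with h have "int p dvd ax \<or> int p dvd bx \<or> int p dvd int (Xc y) - int (Xc x)"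
          using pdvd_mult by metis
        then have "Xc y = Xc x" using alpha_ndvd X_eq unfolding ax_def bx_def by blast
        then have "Lf a x = Lf a y" unfolding Lf_def using True by simp
        then have "[g ^ (2 * (Cc a + Cc x + N * l1x)) = g ^ (2 * (Cc a + Cc y + N * l1y))] (mod p)"
          using e1 e3 by (metis cong_sym cong_trans)
        then have "Cc x = Cc y" using Cuniq Cl by blast
        then show False using xy True \<open>Xc y = Xc x\<close> vertex_eq by metis
      next
        case False
        have d: "(alpha (fst a) (fst y) = 1 \<and> alpha (fst a) (fst x) = g) \<or>
                 (alpha (fst a) (fst y) = g \<and> alpha (fst a) (fst x) = 1)"
          using alpha_distinct[of "fst a" "fst y" "fst x"] cl False by auto
        have "int p dvd int (alpha (fst a) (fst x)) * int (Lf a y) - int (alpha (fst a) (fst y)) * int (Lf a x)"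
          using h unfolding ax_def ay_def Px_def Py_def .
        then show False using QRc[OF e3 e1 d] by blast
      qed
    qed
  next
    case False
    have fxy: "fst x = fst y" using cl False by auto
    define al where "al = int (alpha (fst a) (fst x))"
    define be where "be = int (alpha (fst x) (fst a))"
    define ga where "ga = int (alpha (fst b) (fst x))"
    define de where "de = int (alpha (fst x) (fst b))"
    have LPx: "int (Lf a x) = al * int (Xc a) + be * int (Xc x)" unfolding al_def be_def Lf_def by simp
    have LPy: "int (Lf a y) = al * int (Xc a) + be * int (Xc y)" unfolding al_def be_def Lf_def using fxy by simp
    have LQx: "int (Lf b x) = ga * int (Xc b) + de * int (Xc x)" unfolding ga_def de_def Lf_def by simp
    have LQy: "int (Lf b y) = ga * int (Xc b) + de * int (Xc y)" unfolding ga_def de_def Lf_def using fxy by simp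
    have idt: "int (Lf a x) * int (Lf b y) - int (Lf a y) * int (Lf b x)
        = (int (Xc y) - int (Xc x)) * (al * de * int (Xc a) - be * ga * int (Xc b))"
      unfolding LPx LPy LQx LQy by (simp add: algebra_simps)
    have "int p dvd (int (Xc y) - int (Xc x)) * (al * de * int (Xc a) - be * ga * int (Xc b))"
      using key unfolding idt .
    then have "int p dvd int (Xc y) - int (Xc x) \<or> int p dvd al * de * int (Xc a) - be * ga * int (Xc b)"
      by (rule pdvd_mult)
    then show False
    proof
      assume "int p dvd int (Xc y) - int (Xc x)"
      then have "Xc y = Xc x" by (rule X_eq)
      then have "Lf a x = Lf a y" unfolding Lf_def using fxy by simp
      then have "[g ^ (2 * (Cc a + Cc x + N * l1x)) = g ^ (2 * (Cc a + Cc y + N * l1y))] (mod p)"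
        using e1 e3 by (metis cong_sym cong_trans)
      then have "Cc x = Cc y" using Cuniq Cl by blast
      then show False using xy fxy \<open>Xc y = Xc x\<close> vertex_eq by metis
    next
      assume h: "int p dvd al * de * int (Xc a) - be * ga * int (Xc b)"
      have "de * int (Lf a x) - be * int (Lf b x) = al * de * int (Xc a) - be * ga * int (Xc b)"
        unfolding LPx LQx by (simp add: algebra_simps)
      with h have h2: "int p dvd int (alpha (fst x) (fst b)) * int (Lf a x) - int (alpha (fst x) (fst a)) * int (Lf b x)"
        unfolding de_def be_def by simp
      have d: "(alpha (fst x) (fst a) = 1 \<and> alpha (fst x) (fst b) = g) \<or>
               (alpha (fst x) (fst a) = g \<and> alpha (fst x) (fst b) = 1)"
        using alpha_distinct[of "fst x" "fst a" "fst b"] cl False by auto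
      show False using QRc[OF e1 e2 d h2] .
    qed
  qed
qed

definition Eg :: "(nat \<times> nat) set set" where
  "Eg = {{v, w} | v w. adj v w}"

lemma edge_adj: "{a, x} \<in> Eg \<Longrightarrow> adj a x"
  unfolding Eg_def using adj_sym by (auto simp: doubleton_eq_iff)

lemma Eg_tri: "tripartite_graph (p * N) Eg"
  unfolding tripartite_graph_def Eg_def tri_vertices_def adj_def
  by (auto simp: mem_Times_iff)

lemma Eg_free: "\<not> contains_K2t Eg t"
proof
  assume "contains_K2t Eg t"
  then obtain a b T where ab: "a \<noteq> b" and fT: "finite T" and cT: "card T = t"
    and adjT: "\<forall>x\<in>T. {a, x} \<in> Eg \<and> {b, x} \<in> Eg"
    unfolding contains_K2t_def by blast
  define l1 where "l1 x = (SOME l. [Lf a x = g ^ (2 * (Cc a + Cc x + N * l))] (mod p))" for x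
  define l2 where "l2 x = (SOME l. [Lf b x = g ^ (2 * (Cc b + Cc x + N * l))] (mod p))" for x
  have A: "adj a x" "adj b x" if "x \<in> T" for x using adjT that edge_adj by blast+
  have L1: "[Lf a x = g ^ (2 * (Cc a + Cc x + N * l1 x))] (mod p)" if "x \<in> T" for x
  proof -
    have "\<exists>l. [Lf a x = g ^ (2 * (Cc a + Cc x + N * l))] (mod p)" using A(1)[OF that] by (simp add: adj_def)
    then show ?thesis unfolding l1_def by (rule someI_ex)
  qed
  have L2: "[Lf b x = g ^ (2 * (Cc b + Cc x + N * l2 x))] (mod p)" if "x \<in> T" for x
  proof -
    have "\<exists>l. [Lf b x = g ^ (2 * (Cc b + Cc x + N * l))] (mod p)" using A(2)[OF that] by (simp add: adj_def)
    then show ?thesis unfolding l2_def by (rule someI_ex)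
  qed
  define f where "f x = (int (l1 x) - int (l2 x)) mod int (t - 1)" for x
  have "\<not> inj_on f T"
  proof
    assume inj: "inj_on f T"
    have "f ` T \<subseteq> {0..<int (t - 1)}" using t2 by (auto simp: f_def)
    then have "card T \<le> card {0..<int (t - 1)}" using card_inj_on_le[OF inj] by blast
    then show False using cT t2 by simp
  qed
  then obtain x y where xy: "x \<in> T" "y \<in> T" "x \<noteq> y" "f x = f y"
    unfolding inj_on_def by blast
  have "[int (l1 x) - int (l2 x) = int (l1 y) - int (l2 y)] (mod int (t - 1))"
    using xy(4) unfolding f_def cong_def .
  then have "int (t - 1) dvd (int (l1 x) - int (l2 x)) - (int (l1 y) - int (l2 y))"
    by (simp add: cong_iff_dvd_diff)
  then have "[l1 x + l2 y = l1 y + l2 x] (mod (t - 1))"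
    unfolding natcong_dvd by (simp add: algebra_simps)
  then show False
    using no_two[OF ab xy(3) A(1)[OF xy(1)] A(2)[OF xy(1)] A(1)[OF xy(2)] A(2)[OF xy(2)]
        L1[OF xy(1)] L2[OF xy(1)] L1[OF xy(2)] L2[OF xy(2)]] by blast
qed

definition M :: nat where "M = N * (t - 1)"

lemma pM: "p - 1 = 2 * M" using Ndef by (simp add: M_def)

lemma Mpos: "M > 0" using pM p3 by simp

definition uk :: "nat \<Rightarrow> nat \<Rightarrow> nat" where
  "uk j k = ((g ^ (2 * (j div p + k)) + (p - j mod p)) * g ^ (p - 2)) mod p"

lemma uk_less: "uk j k < p" using p3 by (simp add: uk_def)

lemma uk_prop: "[j mod p + g * uk j k = g ^ (2 * (j div p + k))] (mod p)"
proof -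
  define A where "A = g ^ (2 * (j div p + k))"
  define B where "B = A + (p - j mod p)"
  have e: "p - 1 = Suc (p - 2)" using p3 by simp
  have gg: "g * g ^ (p - 2) = g ^ (p - 1)" unfolding e by simp
  have "[g * uk j k = g * (B * g ^ (p - 2))] (mod p)"
    unfolding uk_def A_def[symmetric] B_def[symmetric] cong_def by (simp add: mod_mult_right_eq)
  also have "g * (B * g ^ (p - 2)) = B * g ^ (p - 1)" using gg by (simp add: ac_simps)
  also have "[B * g ^ (p - 1) = B * 1] (mod p)"
    using fermat_theorem[OF prime_p not_dvd_g] by (rule cong_scalar_left)
  finally have "[j mod p + g * uk j k = j mod p + B] (mod p)" using cong_add_lcancel_nat by simp
  moreover have "j mod p + B = A + p"
  proof -
    have "j mod p < p" using p3 by simp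
    then show ?thesis unfolding B_def by linarith
  qed
  moreover have "[A + p = A] (mod p)" by (simp add: cong_def)
  ultimately show ?thesis unfolding A_def by (metis cong_trans)
qed

lemma alpha_next: "i < 3 \<Longrightarrow> alpha i (Suc i mod 3) = 1"
  by (simp add: alpha_def)

lemma alpha_prev: "i < 3 \<Longrightarrow> alpha (Suc i mod 3) i = g"
proof -
  assume "i < 3"
  then have "i = 0 \<or> i = 1 \<or> i = 2" by auto
  then show ?thesis by (auto simp: alpha_def)
qed

lemma three: "(i::nat) < 3 \<Longrightarrow> i = 0 \<or> i = 1 \<or> i = 2" by auto
lemma mod3_ne2: "(i::nat) < 3 \<Longrightarrow> Suc (Suc i mod 3) mod 3 \<noteq> i"
  by (drule three) (elim disjE; simp)
lemma mod3_cyc: "(i::nat) < 3 \<Longrightarrow> i2 < 3 \<Longrightarrow> i = Suc i2 mod 3 \<Longrightarrow> i2 = Suc i mod 3 \<Longrightarrow> False"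
proof -
  assume a: "i < 3" "i2 < 3" "i = Suc i2 mod 3" "i2 = Suc i mod 3"
  have "i = Suc (Suc i mod 3) mod 3" using a(3)[unfolded a(4)] .
  then show False using mod3_ne2[OF a(1)] by simp
qed
lemma mod3_other: "(i'::nat) \<noteq> Suc i mod 3 \<Longrightarrow> i < 3 \<Longrightarrow> i' < 3 \<Longrightarrow> i \<noteq> i' \<Longrightarrow> i = Suc i' mod 3"
proof -
  assume h: "i' \<noteq> Suc i mod 3" "i < 3" "i' < 3" "i \<noteq> i'"
  from three[OF h(2)] three[OF h(3)] show ?thesis using h(1,4) by (elim disjE) simp_all
qed
lemma mod3_ne1: "(i::nat) < 3 \<Longrightarrow> i \<noteq> Suc i mod 3"
  by (drule three) (elim disjE; simp)

definition Dset :: "(nat \<times> nat \<times> nat) set" where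
  "Dset = {(i, j, j'). i < 3 \<and> adj (i, j) (Suc i mod 3, j')}"

definition Ff :: "nat \<times> nat \<times> nat \<Rightarrow> (nat \<times> nat) set" where
  "Ff = (\<lambda>(i, j, j'). {(i, j), (Suc i mod 3, j')})"

definition Gf :: "nat \<times> nat \<times> nat \<Rightarrow> nat \<times> nat \<times> nat" where
  "Gf = (\<lambda>(i, j, k). (i, j, uk j k + p * (k mod N)))"

lemma Lf_next: "i < 3 \<Longrightarrow> Lf (i, j) (Suc i mod 3, j') = j mod p + g * (j' mod p)"
  by (simp add: Lf_def alpha_next alpha_prev Xc_def)

lemma lt_pN: "u < p \<Longrightarrow> c < N \<Longrightarrow> u + p * c < p * N"
proof -
  assume "u < p" "c < N"
  then have "u + p * c < p * (c + 1)" by simp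
  also have "\<dots> \<le> p * N" using \<open>c < N\<close> by (intro mult_le_mono2) simp
  finally show ?thesis .
qed

lemma Gf_image: "Gf ` ({..<3} \<times> {..<p * N} \<times> {..<M}) = Dset"
proof
  show "Gf ` ({..<3} \<times> {..<p * N} \<times> {..<M}) \<subseteq> Dset"
  proof (rule image_subsetI)
    fix z :: "nat \<times> nat \<times> nat" assume hz: "z \<in> {..<3} \<times> {..<p * N} \<times> {..<M}"
    obtain i j k where z: "z = (i, j, k)" by (cases z)
    have h: "i < 3" "j < p * N" "k < M" using hz z by auto
    define j' where "j' = uk j k + p * (k mod N)"
    have jm: "j' mod p = uk j k" "j' div p = k mod N" unfolding j'_def using uk_less p3 by simp_all
    have "j' < p * N" unfolding j'_def using lt_pN uk_less Npos by simp
    moreover have "[Lf (i, j) (Suc i mod 3, j') = g ^ (2 * (Cc (i, j) + Cc (Suc i mod 3, j') + N * (k div N)))] (mod p)"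
    proof -
      have "Cc (i, j) + Cc (Suc i mod 3, j') + N * (k div N) = j div p + k"
        using jm by (simp add: Cc_def)
      then show ?thesis using uk_prop[of j k] h Lf_next jm by simp
    qed
    moreover have "i \<noteq> Suc i mod 3" using h mod3_ne1 by auto
    ultimately have "adj (i, j) (Suc i mod 3, j')" using h unfolding adj_def by auto
    then show "Gf z \<in> Dset" using h z unfolding Gf_def Dset_def j'_def by simp
  qed
next
  show "Dset \<subseteq> Gf ` ({..<3} \<times> {..<p * N} \<times> {..<M})"
  proof
    fix z assume hz: "z \<in> Dset"
    obtain i j j' where z: "z = (i, j, j')" by (cases z)
    from hz z have i3: "i < 3" and ad: "adj (i, j) (Suc i mod 3, j')" by (auto simp: Dset_def)
    then have jl: "j < p * N" "j' < p * N" by (auto simp: adj_def)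
    obtain l where l: "[j mod p + g * (j' mod p) = g ^ (2 * (j div p + j' div p + N * l))] (mod p)"
      using ad i3 Lf_next by (auto simp: adj_def Cc_def)
    define c' where "c' = j' div p"
    have c'N: "c' < N" using Cc_less[of "(0, j')"] jl by (simp add: Cc_def c'_def)
    define k where "k = (c' + N * l) mod M"
    have kM: "k < M" using Mpos by (simp add: k_def)
    have "N dvd M" by (simp add: M_def)
    then have "k mod N = (c' + N * l) mod N" unfolding k_def by (simp add: mod_mod_cancel)
    then have kN: "k mod N = c'" using c'N by simp
    have "[k = c' + N * l] (mod M)" unfolding k_def cong_def by simp
    then have "int M dvd int k - (int c' + int N * int l)" unfolding natcong_dvd by simp
    then have "2 * int M dvd 2 * (int k - (int c' + int N * int l))" by (rule mult_dvd_mono[OF dvd_refl])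
    then have "[2 * k = 2 * (c' + N * l)] (mod (2 * M))"
      unfolding natcong_dvd by (simp add: algebra_simps)
    then have "[2 * (j div p + k) = 2 * (j div p + c' + N * l)] (mod (p - 1))"
      unfolding pM natcong_dvd by (simp add: algebra_simps)
    then have "[g ^ (2 * (j div p + k)) = g ^ (2 * (j div p + c' + N * l))] (mod p)"
      using gpow by blast
    then have "[j mod p + g * uk j k = j mod p + g * (j' mod p)] (mod p)"
      using uk_prop[of j k] l unfolding c'_def by (metis cong_sym cong_trans add.assoc)
    then have "[g * uk j k = g * (j' mod p)] (mod p)" by (simp add: cong_add_lcancel_nat)
    then have "[uk j k = j' mod p] (mod p)"
      using cong_mult_lcancel_nat cop by (metis coprime_commute)
    moreover have "j' mod p < p" using p3 by simp
    ultimately have "uk j k = j' mod p" using cong_less_modulus_unique_nat uk_less by blast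
    then have "Gf (i, j, k) = (i, j, j')"
      unfolding Gf_def using kN c'_def by simp
    moreover have "(i, j, k) \<in> {..<3} \<times> {..<p * N} \<times> {..<M}" using i3 jl kM by simp
    ultimately show "z \<in> Gf ` ({..<3} \<times> {..<p * N} \<times> {..<M})" using z by force
  qed
qed

lemma Gf_inj: "inj_on Gf ({..<3} \<times> {..<p * N} \<times> {..<M})"
proof (rule inj_onI)
  fix a b assume ha: "a \<in> {..<3} \<times> {..<p * N} \<times> {..<M}" and hb: "b \<in> {..<3} \<times> {..<p * N} \<times> {..<M}"
    and eqab: "Gf a = Gf b"
  obtain i j k where a: "a = (i, j, k)" by (cases a)
  obtain i2 j2 k2 where b: "b = (i2, j2, k2)" by (cases b)
  have h: "i < 3" "j < p * N" "k < M" "i2 < 3" "j2 < p * N" "k2 < M" using ha hb a b by auto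
  have eq: "Gf (i, j, k) = Gf (i2, j2, k2)" using eqab a b by simp
  from eq have e0: "i = i2 \<and> j = j2 \<and> uk j k + p * (k mod N) = uk j2 k2 + p * (k2 mod N)"
    unfolding Gf_def prod.case prod.inject by blast
  then have e: "i = i2" "j = j2" "uk j k + p * (k mod N) = uk j k2 + p * (k2 mod N)"
    by metis+
  have "(uk j k + p * (k mod N)) mod p = (uk j k2 + p * (k2 mod N)) mod p" using e(3) by simp
  then have u: "uk j k = uk j k2" using uk_less by simp
  have "[g ^ (2 * (j div p + k)) = j mod p + g * uk j k] (mod p)" using uk_prop cong_sym by blast
  also have "[j mod p + g * uk j k = g ^ (2 * (j div p + k2))] (mod p)" using uk_prop u by simp
  finally have "[2 * (j div p + k) = 2 * (j div p + k2)] (mod (p - 1))" using gpow by blast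
  then have "int (2 * M) dvd 2 * (int k - int k2)" unfolding pM natcong_dvd by (simp add: algebra_simps)
  then have "2 * int M dvd 2 * (int k - int k2)" by simp
  then have "int M dvd int k - int k2" by (rule zdvd_mult_cancel) simp
  then have "[k = k2] (mod M)" using natcong_dvd by simp
  then have "k = k2" using cong_less_modulus_unique_nat h by blast
  then show "a = b" using e a b by simp
qed

lemma card_Dset: "card Dset = 3 * (p * N) * M"
proof -
  have "card Dset = card ({..<3::nat} \<times> {..<p * N} \<times> {..<M})"
    using card_image[OF Gf_inj] Gf_image by simp
  then show ?thesis by (simp add: card_cartesian_product)
qed

lemma Eg_image: "Eg = Ff ` Dset"
proof
  show "Eg \<subseteq> Ff ` Dset"
  proof
    fix e assume "e \<in> Eg"
    then obtain v w where e: "e = {v, w}" and ad: "adj v w" unfolding Eg_def by blast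
    obtain i j where v: "v = (i, j)" by (cases v)
    obtain i' j' where w: "w = (i', j')" by (cases w)
    have c: "i < 3" "i' < 3" "i \<noteq> i'" using ad v w by (auto simp: adj_def)
    show "e \<in> Ff ` Dset"
    proof (cases "i' = Suc i mod 3")
      case True
      then have "(i, j, j') \<in> Dset" using ad v w c by (simp add: Dset_def)
      moreover have "Ff (i, j, j') = e" using e v w True by (simp add: Ff_def)
      ultimately show ?thesis by force
    next
      case False
      then have "i = Suc i' mod 3" using c mod3_other by blast
      then have "(i', j', j) \<in> Dset" using adj_sym[OF ad] v w c by (simp add: Dset_def)
      moreover have "Ff (i', j', j) = e" using e v w \<open>i = Suc i' mod 3\<close> by (auto simp: Ff_def)
      ultimately show ?thesis by force
    qed
  qed
next
  show "Ff ` Dset \<subseteq> Eg"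
    unfolding Eg_def Dset_def Ff_def by auto
qed

lemma Ff_inj: "inj_on Ff Dset"
proof (rule inj_onI)
  fix a b assume ha: "a \<in> Dset" and hb: "b \<in> Dset" and eqab: "Ff a = Ff b"
  obtain i j j' where a: "a = (i, j, j')" by (cases a)
  obtain i2 j2 j2' where b: "b = (i2, j2, j2')" by (cases b)
  have c: "i < 3" "i2 < 3" using ha hb a b by (auto simp: Dset_def)
  have eq: "Ff (i, j, j') = Ff (i2, j2, j2')" using eqab a b by simp
  from eq have "((i, j) = (i2, j2) \<and> (Suc i mod 3, j') = (Suc i2 mod 3, j2')) \<or>
      ((i, j) = (Suc i2 mod 3, j2') \<and> (Suc i mod 3, j') = (i2, j2))"
    unfolding Ff_def by (simp add: doubleton_eq_iff)
  then have "i = i2 \<and> j = j2 \<and> j' = j2'"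
  proof
    assume "(i, j) = (i2, j2) \<and> (Suc i mod 3, j') = (Suc i2 mod 3, j2')"
    then show ?thesis by simp
  next
    assume h: "(i, j) = (Suc i2 mod 3, j2') \<and> (Suc i mod 3, j') = (i2, j2)"
    then have "i = Suc i2 mod 3" "i2 = Suc i mod 3" unfolding prod.inject by auto
    then show ?thesis using c mod3_cyc by blast
  qed
  then show "a = b" using a b by simp
qed

lemma card_Eg: "card Eg = 3 * (p * N) * M"
  using card_image[OF Ff_inj] Eg_image card_Dset by simp

end

lemma finite_ex_set: "finite {card E | E. tripartite_graph n E \<and> \<not> contains_K2t E t}"
proof -
  have "{card E | E. tripartite_graph n E \<and> \<not> contains_K2t E t} \<subseteq> card ` Pow (Pow (tri_vertices n))"
  proof
    fix c assume "c \<in> {card E | E. tripartite_graph n E \<and> \<not> contains_K2t E t}"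
    then obtain E where c: "c = card E" and tg: "tripartite_graph n E" by blast
    have "E \<subseteq> Pow (tri_vertices n)"
    proof
      fix e assume "e \<in> E"
      then obtain u v where "e = {u, v}" "u \<in> tri_vertices n" "v \<in> tri_vertices n"
        using tg unfolding tripartite_graph_def by metis
      then show "e \<in> Pow (tri_vertices n)" by simp
    qed
    then have "E \<in> Pow (Pow (tri_vertices n))" by simp
    then show "c \<in> card ` Pow (Pow (tri_vertices n))" unfolding c by (rule imageI)
  qed
  moreover have "finite (tri_vertices n)" unfolding tri_vertices_def by simp
  then have "finite (card ` Pow (Pow (tri_vertices n)))" by simp
  ultimately show ?thesis by (rule finite_subset)
qed

lemma final_arith:
  fixes p N T :: nat assumes "T > 0"
  shows "3 * real p * (2 * real N * real T)^2 / (4 * real T) = real (3 * (p * N) * (N * T))"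
  using assms by (simp add: power2_eq_square field_simps)

theorem theorem2:
  fixes t p :: nat
  assumes "even t" and "t \<ge> 2" and "prime p" and "p \<ge> 3"
    and "[p = 1] (mod (t - 1))"
  shows "real (ex3_K2t (p * (p - 1) div (2 * (t - 1))) t)
           \<ge> 3 * real p * (real p - 1)^2 / (4 * (real t - 1))"
proof -
  have podd: "odd p" using prime_odd_nat assms(3,4) by simp
  have d1: "(t - 1) dvd (p - 1)" using assms(5) cong_to_1_nat by blast
  have d2: "2 dvd p - 1" using podd assms(4) by simp
  have "odd (t - 1)" using assms(1,2) by simp
  then have cp: "coprime 2 (t - 1)" by simp
  have "2 * (t - 1) dvd p - 1" using divides_mult[OF d2 d1 cp] .
  define N where "N = (p - 1) div (2 * (t - 1))"
  have "2 * (t - 1) * N = p - 1"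
    unfolding N_def using \<open>2 * (t - 1) dvd p - 1\<close> by (rule dvd_mult_div_cancel)
  then have Ndef: "p - 1 = 2 * N * (t - 1)" by (simp add: ac_simps)
  have "2 * (t - 1) > 0" using assms(2) by simp
  have nN: "p * (p - 1) div (2 * (t - 1)) = p * N"
  proof -
    have e: "p * (p - 1) = (2 * (t - 1)) * (p * N)" using Ndef by (simp add: ac_simps)
    show ?thesis unfolding e using \<open>2 * (t - 1) > 0\<close> by simp
  qed
  have "p \<in> cyclic_moduli"
  proof -
    have "p = p ^ 1 \<and> prime p \<and> odd p \<and> (1::nat) > 0" using assms(3) podd by simp
    then have "p \<in> {q ^ k |q k. prime q \<and> odd q \<and> k > 0}" by blast
    then show ?thesis unfolding cyclic_moduli_def by (intro UnI1 UnI2)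
  qed
  then obtain g where g: "residue_primroot p g" using residue_primroot_iff_in_cyclic_moduli by blast
  interpret K: K2t_constr p t g N
    by (rule K2t_constr.intro[OF assms(3) assms(4) assms(2) g Ndef])
  have mem: "card K.Eg \<in> {card E | E. tripartite_graph (p * N) E \<and> \<not> contains_K2t E t}"
    using K.Eg_tri K.Eg_free by blast
  have le: "card K.Eg \<le> ex3_K2t (p * N) t"
    unfolding ex3_K2t_def using Max_ge[OF finite_ex_set mem] .
  have cE: "card K.Eg = 3 * (p * N) * (N * (t - 1))" using K.card_Eg by (simp add: K.M_def)
  have "real (p - 1) = real (2 * N * (t - 1))" using Ndef by simp
  moreover have "real (p - 1) = real p - 1" using assms(4) by (simp add: of_nat_diff)
  ultimately have rp: "real p - 1 = 2 * real N * real (t - 1)" by simp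
  have rt: "real t - 1 = real (t - 1)" using assms(2) by simp
  have tpos: "real (t - 1) > 0" using assms(2) by simp
  have "3 * real p * (real p - 1)^2 / (4 * (real t - 1)) = real (3 * (p * N) * (N * (t - 1)))"
    unfolding rp rt using final_arith[of "t - 1" p N] assms(2) by simp
  also have "\<dots> \<le> real (ex3_K2t (p * N) t)"
  proof -
    have "3 * (p * N) * (N * (t - 1)) \<le> ex3_K2t (p * N) t" using le cE by simp
    then show ?thesis by (rule of_nat_mono)
  qed
  finally show ?thesis unfolding nN .
qed

end
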